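(* For every integer $n\ge0$, $A_3(n)=C_{3,3}(n)$, where $A_3(n)$ is the number of partitions $\lambda$ of $n$ for which there exists an integer $j\ge 0$ such that $m_{2i-1}(\lambda)=2$ for every $1\le i\le j$ and every part of $\lambda$ greater than $2j$ has multiplicity at most $1$ (i.e., if $2j-1$ is the largest repeated odd part, then all positive odd integers less than $2j$ appear exactly twice and no part greater than $2j$ is repeated; even parts at most $2j$ are unrestricted), and $C_{3,3}(n)$ is the number of partitions of $n$ into parts $\not\equiv 0,\pm3\pmod 7$.
   Context: $m_j(\lambda)$ denotes the number of times $j$ appears as a part of the partition $\lambda$. *)

theory Defs
  imports Main "HOL-Library.Multiset"
begin

definition partitions :: "nat \<Rightarrow> nat multiset set" where
  "partitions n = {p. (\<forall>x\<in>#p. 0 < x) \<and> sum_mset p = n}"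

definition A3_cond :: "nat multiset \<Rightarrow> bool" where
  "A3_cond p \<longleftrightarrow> (\<exists>j::nat. (\<forall>i. 1 \<le> i \<and> i \<le> j \<longrightarrow> count p (2*i - 1) = 2)
                           \<and> (\<forall>k. k > 2*j \<longrightarrow> count p k \<le> 1))"

definition A3 :: "nat \<Rightarrow> nat" where
  "A3 n = card {p \<in> partitions n. A3_cond p}"

definition C33 :: "nat \<Rightarrow> nat" where
  "C33 n = card {p \<in> partitions n. \<forall>x\<in>#p. x mod 7 \<notin> {0, 3, 4}}"

end

theory Submission
  imports Defs "HOL-Computational_Algebra.Formal_Laurent_Series" "HOL-Library.Groups_Big_Fun"
begin


abbreviation qX :: "rat fls" where "qX \<equiv> fls_X"
declare fls_X_power_int [simp del]

lemma X_pow_eq_1 [simp]: "qX ^ k = 1 \<longleftrightarrow> k = 0"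
proof
  assume h: "qX ^ k = 1"
  have "fls_nth (qX ^ k) 0 = fls_nth 1 0" by (simp only: h)
  then show "k = 0" by (simp split: if_splits)
qed simp

lemma one_minus_X_ne0: "0 < k \<Longrightarrow> (1 - qX ^ k) \<noteq> 0"
  by simp

lemma Xp_add: "qX powi a * qX powi b = qX powi (a+b)"
  by (simp add: power_int_add)

definition P :: "nat \<Rightarrow> nat \<Rightarrow> rat fls" where
  "P e L = (\<Prod>i\<in>{1..L}. (1 - qX ^ (e*i)))"

lemma P_0 [simp]: "P e 0 = 1" by (simp add: P_def)
lemma P_Suc: "P e (Suc L) = P e L * (1 - qX ^ (e * Suc L))"
  by (simp add: P_def prod.cl_ivl_Suc)  
lemma P_ne0: "0 < e \<Longrightarrow> P e L \<noteq> 0"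
  by (induction L) (auto simp: P_Suc)

definition gb :: "nat \<Rightarrow> nat \<Rightarrow> nat \<Rightarrow> rat fls" where
  "gb e m k = (if k \<le> m then P e m / (P e k * P e (m-k)) else 0)"

lemma gb_0 [simp]: "0 < e \<Longrightarrow> gb e m 0 = 1"
  using P_ne0 by (simp add: gb_def)
lemma gb_same [simp]: "0 < e \<Longrightarrow> gb e m m = 1"
  using P_ne0 by (simp add: gb_def)
lemma gb_sym: "k \<le> m \<Longrightarrow> gb e m (m - k) = gb e m k"
  by (simp add: gb_def mult.commute)

lemma gb_pascalA:
  assumes e: "0 < e" and k: "1 \<le> k" "k \<le> m"
  shows "gb e (Suc m) k = gb e m (k-1) + qX^(e*k) * gb e m k"
proof -
  obtain j where j: "k = Suc j" using k by (cases k) auto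
  obtain l where l: "m - k = l" by blast
  have m: "m = Suc j + l" using k j l by simp
  have Suc_m_k: "Suc m - k = Suc l" using m j by simp
  have m_k1: "m - (k-1) = Suc l" using m j by simp
  have ne: "P e a \<noteq> 0" for a using P_ne0[OF e] .
  have 1: "gb e (Suc m) k = P e (Suc m) / (P e k * P e (Suc l))" using k Suc_m_k by (simp add: gb_def)
  have 2: "gb e m (k-1) = P e m / (P e j * P e (Suc l))" using k m_k1 j by (simp add: gb_def)
  have 3: "gb e m k = P e m / (P e k * P e l)" using k l by (simp add: gb_def)
  have key: "(1 - qX^(e*Suc m)) = (1 - qX^(e*k)) + qX^(e*k) * (1 - qX^(e * Suc l))"
    by (simp add: m j algebra_simps flip: power_add)
  have u: "1 - qX^(e*k) \<noteq> 0" "1 - qX^(e * Suc l) \<noteq> 0"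
    using e k by auto
  have gen: "\<And>(Pm::rat fls) Pj Pl u v w x. Pj \<noteq> 0 \<Longrightarrow> Pl \<noteq> 0 \<Longrightarrow> u \<noteq> 0 \<Longrightarrow> v \<noteq> 0 \<Longrightarrow> w = u + x * v \<Longrightarrow>
      Pm * w / (Pj * u * (Pl * v)) = Pm / (Pj * (Pl * v)) + x * (Pm / (Pj * u * Pl))"
    by (simp add: field_simps)
  show ?thesis unfolding 1 2 3 unfolding j P_Suc
    by (rule gen) (use ne u key j in auto)
qed

definition gz :: "nat \<Rightarrow> nat \<Rightarrow> int \<Rightarrow> rat fls" where
  "gz e m k = (if 0 \<le> k \<and> k \<le> int m then gb e m (nat k) else 0)"

lemma gz_nz: "gz e m k \<noteq> 0 \<Longrightarrow> 0 \<le> k \<and> k \<le> int m"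
  by (simp add: gz_def split: if_splits)

lemma gz_sym: "gz e m (int m - k) = gz e m k"
proof (cases "0 \<le> k \<and> k \<le> int m")
  case True
  then have "nat (int m - k) = m - nat k" by auto
  moreover have "nat k \<le> m" using True by auto
  ultimately show ?thesis using True gb_sym[of "nat k" m e] by (simp add: gz_def)
qed (auto simp: gz_def)

lemma gz_pascalA:
  assumes e: "0 < e"
  shows "gz e (Suc m) k = gz e m (k-1) + qX powi (int e * k) * gz e m k"
proof -
  consider "k < 0" | "k = 0" | "1 \<le> k \<and> k \<le> int m" | "k = int m + 1" | "k > int m + 1" by linarith
  then show ?thesis
  proof cases
    case 3
    then have "nat k \<ge> 1" "nat k \<le> m" by auto
    from gb_pascalA[OF e this] 3 show ?thesis
      by (simp add: gz_def nat_diff_distrib power_int_def nat_mult_distrib)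
  next
    case 4
    then have "nat k = Suc m" "nat (k - 1) = m" by auto
    with 4 e show ?thesis by (simp add: gz_def)
  qed (use e in \<open>auto simp: gz_def\<close>)
qed

lemma gz_pascalB:
  assumes e: "0 < e"
  shows "gz e (Suc m) k = qX powi (int e * (int m + 1 - k)) * gz e m (k-1) + gz e m k"
proof -
  have "gz e (Suc m) k = gz e (Suc m) (int (Suc m) - k)" by (simp only: gz_sym)
  also have "\<dots> = gz e m (int m - k) + qX powi (int e * (int m + 1 - k)) * gz e m (int m + 1 - k)"
    by (subst gz_pascalA[OF e]) (simp add: algebra_simps)
  also have "gz e m (int m - k) = gz e m k" by (rule gz_sym)
  also have "gz e m (int m + 1 - k) = gz e m (int m - (k - 1))" by (simp add: algebra_simps)
  also have "\<dots> = gz e m (k-1)" by (rule gz_sym)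
  finally show ?thesis by simp
qed

lemma Xp_add2: "qX powi a * (qX powi b * z) = qX powi (a+b) * z"
  by (simp add: Xp_add flip: mult.assoc)
lemma Xp_nat: "qX ^ n = qX powi (int n)" by simp

definition sg :: "int \<Rightarrow> rat fls" where "sg r = (if even r then 1 else -1)"
lemma sg_succ: "sg (r+1) = - sg r" by (simp add: sg_def)
lemma sg_neg: "sg (-r) = sg r" by (simp add: sg_def)

definition ce :: "int \<Rightarrow> int" where "ce r = (3*r^2 - r) div 2"
lemma ce_succ: "ce (r+1) = ce r + 3*r + 1"
proof -
  have "3*(r+1)^2 - (r+1) = (3*r^2 - r) + 2*(3*r+1)" by (simp add: power2_eq_square algebra_simps)
  then show ?thesis unfolding ce_def by simp
qed
lemma ce_neg: "ce (-r) = ce r + r"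
proof -
  have "3*(-r)^2 - (-r) = (3*r^2 - r) + 2*r" by (simp add: power2_eq_square algebra_simps)
  then show ?thesis unfolding ce_def by simp
qed

definition cw :: "int \<Rightarrow> rat fls" where "cw r = sg r * qX powi (ce r)"

lemma test1: "cw (s+1) * qX powi (2*(int n - s)) = - (qX ^ (2*n+1) * cw (-s))"
  unfolding cw_def Xp_nat
  apply (simp only: ce_succ ce_neg sg_succ sg_neg)
  by (simp add: mult.assoc Xp_add Xp_add2 mult.left_commute[of "sg _"] algebra_simps del: power_int_of_nat)


lemma fin_supp: "(\<And>r. f r \<noteq> 0 \<Longrightarrow> a \<le> r \<and> r \<le> b) \<Longrightarrow> finite {r::int. f r \<noteq> 0}"
  by (rule finite_subset[of _ "{a..b}"]) auto

lemma SA_add: "finite {r. f r \<noteq> 0} \<Longrightarrow> finite {r. g r \<noteq> 0} \<Longrightarrow>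
   Sum_any (\<lambda>r. f r + g r) = Sum_any f + Sum_any (g :: int \<Rightarrow> rat fls)"
  by (rule Sum_any.distrib)
lemma SA_cmult: "finite {r. f r \<noteq> 0} \<Longrightarrow> Sum_any (\<lambda>r. k * f r) = k * Sum_any (f :: int \<Rightarrow> rat fls)"
  by (simp add: Sum_any_right_distrib)
lemma SA_bij: "bij l \<Longrightarrow> Sum_any (\<lambda>r. f (l r)) = Sum_any (f :: int \<Rightarrow> rat fls)"
  by (rule Sum_any.reindex_cong[symmetric]) (auto simp: o_def)
lemma SA_shift: "Sum_any (\<lambda>r. f (r + c)) = Sum_any (f :: int \<Rightarrow> rat fls)"
proof -
  have "bij (\<lambda>r::int. r + c)" by (rule bijI') (auto intro: exI[of _ "_ - c"])
  then show ?thesis by (rule SA_bij)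
qed
lemma SA_refl: "Sum_any (\<lambda>r. f (c - r)) = Sum_any (f :: int \<Rightarrow> rat fls)"
proof -
  have "bij (\<lambda>r::int. c - r)" by (rule bijI') (auto intro: exI[of _ "c - _"])
  then show ?thesis by (rule SA_bij)
qed

lemma fin_gz: "finite {r. w r * gz e m (a + r) \<noteq> 0}"
  by (rule fin_supp[of _ "-a" "int m - a"]) (auto dest!: gz_nz)
lemma fin_gz': "finite {r. w r * gz e m (a + r - 1) \<noteq> 0}"
  by (rule fin_supp[of _ "1-a" "int m - a + 1"]) (auto dest!: gz_nz)

definition F1 :: "nat \<Rightarrow> rat fls" where "F1 n = Sum_any (\<lambda>r. cw r * gz 2 (2*n) (int n + r))"
definition G1 :: "nat \<Rightarrow> rat fls" where "G1 n = Sum_any (\<lambda>r. cw r * gz 2 (2*n+1) (int n + r))"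

lemma step1: "G1 n = (1 - qX^(2*n+1)) * F1 n"
proof -
  have pw: "cw r * gz 2 (2*n+1) (int n + r) = cw r * qX powi (2*(int (2*n)+1-(int n + r))) * gz 2 (2*n) (int n + r - 1) + cw r * gz 2 (2*n) (int n + r)" for r
    using gz_pascalB[of 2 "2*n" "int n + r"] by (simp add: distrib_left mult.assoc)
  have "G1 n = Sum_any (\<lambda>r. cw r * qX powi (2*(int (2*n)+1-(int n + r))) * gz 2 (2*n) (int n + r - 1)) + F1 n"
    unfolding G1_def F1_def pw by (rule SA_add) (rule fin_gz', rule fin_gz)
  also have "Sum_any (\<lambda>r. cw r * qX powi (2*(int (2*n)+1-(int n + r))) * gz 2 (2*n) (int n + r - 1))
     = Sum_any (\<lambda>s. cw (s+1) * qX powi (2*(int n - s)) * gz 2 (2*n) (int n + s))"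
    by (subst SA_shift[symmetric, of _ 1]) (simp add: algebra_simps)
  also have "\<dots> = Sum_any (\<lambda>s. - (qX ^ (2*n+1)) * (cw (-s) * gz 2 (2*n) (int n + s)))"
    by (rule Sum_any.cong, subst test1, simp only: mult_minus_left mult.assoc)
  also have "\<dots> = - (qX ^ (2*n+1)) * Sum_any (\<lambda>s. cw (-s) * gz 2 (2*n) (int n + s))"
    by (rule SA_cmult) (rule fin_gz)
  also have "Sum_any (\<lambda>s. cw (-s) * gz 2 (2*n) (int n + s)) = Sum_any (\<lambda>s. cw s * gz 2 (2*n) (int n - s))"
    by (subst SA_refl[symmetric, of _ 0]) simp
  also have "\<dots> = F1 n"
    unfolding F1_def
  proof (rule Sum_any.cong)
    fix s
    have "gz 2 (2*n) (int n - s) = gz 2 (2*n) (int (2*n) - (int n - s))" by (rule gz_sym[symmetric])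
    then show "cw s * gz 2 (2*n) (int n - s) = cw s * gz 2 (2*n) (int n + s)" by simp
  qed
  finally show ?thesis by (simp add: algebra_simps)
qed

lemma test2: "cw (-1 - r) * qX powi (2*(int n - r)) = - (cw r * qX powi (2*(int n + 1 + r)))"
proof -
  have "cw (-1 - r) = cw (-(r+1))" by (rule arg_cong[where f=cw]) simp
  then show ?thesis
    unfolding cw_def
    apply (simp only: ce_succ ce_neg sg_succ sg_neg)
    by (simp add: mult.assoc Xp_add Xp_add2 mult.left_commute[of "sg _"] algebra_simps del: power_int_of_nat)
qed

lemma step2: "F1 (Suc n) = G1 n"
proof -
  define Z where "Z = Sum_any (\<lambda>r. cw r * qX powi (2*(int n + 1 + r)) * gz 2 (2*n+1) (int n + 1 + r))"
  have pw: "cw r * gz 2 (2 * Suc n) (int (Suc n) + r) = cw r * gz 2 (2*n+1) (int n + r) + cw r * qX powi (2*(int n + 1 + r)) * gz 2 (2*n+1) (int n + 1 + r)" for r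
    using gz_pascalA[of 2 "2*n+1" "int n + 1 + r"] by (simp add: distrib_left mult.assoc algebra_simps)
  have fin: "finite {r. cw r * qX powi (2*(int n + 1 + r)) * gz 2 (2*n+1) (int n + 1 + r) \<noteq> 0}"
    using fin_gz[of "\<lambda>r. cw r * qX powi (2*(int n + 1 + r))" 2 "2*n+1" "int n + 1"] by (simp add: add.assoc)
  have 1: "F1 (Suc n) = G1 n + Z"
    unfolding G1_def F1_def pw Z_def by (rule SA_add) (rule fin_gz, rule fin)
  have "Z = Sum_any (\<lambda>r. cw (-1 - r) * qX powi (2*(int n - r)) * gz 2 (2*n+1) (int n - r))"
    unfolding Z_def by (subst SA_refl[symmetric, of _ "-1"]) (simp add: algebra_simps)
  also have "\<dots> = Sum_any (\<lambda>r. -1 * (cw r * qX powi (2*(int n + 1 + r)) * gz 2 (2*n+1) (int n + 1 + r)))"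
  proof (rule Sum_any.cong)
    fix r
    have "gz 2 (2*n+1) (int n - r) = gz 2 (2*n+1) (int (2*n+1) - (int n - r))" by (rule gz_sym[symmetric])
    then have g: "gz 2 (2*n+1) (int n - r) = gz 2 (2*n+1) (int n + 1 + r)" by (simp add: ac_simps)
    show "cw (-1 - r) * qX powi (2*(int n - r)) * gz 2 (2*n+1) (int n - r) = -1 * (cw r * qX powi (2*(int n + 1 + r)) * gz 2 (2*n+1) (int n + 1 + r))"
      unfolding g test2 by simp
  qed
  also have "\<dots> = -1 * Z" unfolding Z_def by (rule SA_cmult) (rule fin)
  finally have "Z = 0" by simp
  with 1 show ?thesis by simp
qed

definition Podd :: "nat \<Rightarrow> rat fls" where "Podd n = (\<Prod>i<n. (1 - qX^(2*i+1)))"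

lemma identI: "F1 n = Podd n"
proof (induction n)
  case 0
  have "F1 0 = 1"
    unfolding F1_def by (subst Sum_any.expand_superset[of "{0}"]) (auto simp: gz_def cw_def sg_def ce_def split: if_splits)
  then show ?case by (simp add: Podd_def)
next
  case (Suc n)
  show ?case using step2[of n] step1[of n] Suc by (simp add: Podd_def mult.commute)
qed

definition de :: "int \<Rightarrow> int" where "de r = (7*r^2 - r) div 2"
lemma de_succ: "de (r+1) = de r + 7*r + 3"
proof -
  have "7*(r+1)^2 - (r+1) = (7*r^2 - r) + 2*(7*r+3)" by (simp add: power2_eq_square algebra_simps)
  then show ?thesis unfolding de_def by simp
qed
lemma de_pred: "de (r-1) = de r - 7*r + 4"
proof -
  have "7*(r-1)^2 - (r-1) = (7*r^2 - r) + 2*(4 - 7*r)" by (simp add: power2_eq_square algebra_simps)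
  then show ?thesis unfolding de_def by simp
qed
lemma de_ce: "de r = ce r + 2*r^2"
proof -
  have "7*r^2 - r = (3*r^2 - r) + 2*(2*r^2)" by (simp add: algebra_simps)
  then show ?thesis unfolding de_def ce_def by simp
qed
lemma sg_pred: "sg (r-1) = - sg r" by (simp add: sg_def)

definition dw :: "int \<Rightarrow> rat fls" where "dw r = sg r * qX powi (de r)"

lemma test3: "dw (s+1) * qX powi (7*(int N - s)) = - (qX ^ (7*N+3) * dw s)"
  unfolding dw_def Xp_nat
  apply (simp only: de_succ sg_succ)
  by (simp add: mult.assoc Xp_add Xp_add2 mult.left_commute[of "sg _"] algebra_simps del: power_int_of_nat)
lemma test4: "dw (s-1) * qX powi (7*(int N + s)) = - (qX ^ (7*N+4) * dw s)"
  unfolding dw_def Xp_nat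
  apply (simp only: de_pred sg_pred)
  by (simp add: mult.assoc Xp_add Xp_add2 mult.left_commute[of "sg _"] algebra_simps del: power_int_of_nat)

definition TJ :: "nat \<Rightarrow> rat fls" where "TJ n = Sum_any (\<lambda>r. dw r * gz 7 (2*n) (int n + r))"
definition UJ :: "nat \<Rightarrow> rat fls" where "UJ n = Sum_any (\<lambda>r. dw r * gz 7 (2*n+1) (int n + r))"

lemma jstep1: "UJ n = (1 - qX^(7*n+3)) * TJ n"
proof -
  have pw: "dw r * gz 7 (2*n+1) (int n + r) = dw r * qX powi (7*(int (2*n)+1-(int n + r))) * gz 7 (2*n) (int n + r - 1) + dw r * gz 7 (2*n) (int n + r)" for r
    using gz_pascalB[of 7 "2*n" "int n + r"] by (simp add: distrib_left mult.assoc)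
  have "UJ n = Sum_any (\<lambda>r. dw r * qX powi (7*(int (2*n)+1-(int n + r))) * gz 7 (2*n) (int n + r - 1)) + TJ n"
    unfolding UJ_def TJ_def pw by (rule SA_add) (rule fin_gz', rule fin_gz)
  also have "Sum_any (\<lambda>r. dw r * qX powi (7*(int (2*n)+1-(int n + r))) * gz 7 (2*n) (int n + r - 1))
     = Sum_any (\<lambda>s. dw (s+1) * qX powi (7*(int n - s)) * gz 7 (2*n) (int n + s))"
    by (subst SA_shift[symmetric, of _ 1]) (simp add: algebra_simps)
  also have "\<dots> = Sum_any (\<lambda>s. - (qX ^ (7*n+3)) * (dw s * gz 7 (2*n) (int n + s)))"
    by (rule Sum_any.cong, subst test3, simp only: mult_minus_left mult.assoc)
  also have "\<dots> = - (qX ^ (7*n+3)) * TJ n"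
    unfolding TJ_def by (rule SA_cmult) (rule fin_gz)
  finally show ?thesis by (simp add: algebra_simps)
qed

lemma jstep2: "TJ (Suc n) = (1 - qX^(7*n+4)) * UJ n"
proof -
  have pw: "dw r * gz 7 (2 * Suc n) (int (Suc n) + r) = dw r * gz 7 (2*n+1) (int n + r) + dw r * qX powi (7*(int n + 1 + r)) * gz 7 (2*n+1) (int n + 1 + r)" for r
    using gz_pascalA[of 7 "2*n+1" "int n + 1 + r"] by (simp add: distrib_left mult.assoc algebra_simps)
  have fin: "finite {r. dw r * qX powi (7*(int n + 1 + r)) * gz 7 (2*n+1) (int n + 1 + r) \<noteq> 0}"
    using fin_gz[of "\<lambda>r. dw r * qX powi (7*(int n + 1 + r))" 7 "2*n+1" "int n + 1"] by (simp add: add.assoc)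
  have 1: "TJ (Suc n) = UJ n + Sum_any (\<lambda>r. dw r * qX powi (7*(int n + 1 + r)) * gz 7 (2*n+1) (int n + 1 + r))"
    unfolding UJ_def TJ_def pw by (rule SA_add) (rule fin_gz, rule fin)
  also have "Sum_any (\<lambda>r. dw r * qX powi (7*(int n + 1 + r)) * gz 7 (2*n+1) (int n + 1 + r))
     = Sum_any (\<lambda>s. dw (s-1) * qX powi (7*(int n + s)) * gz 7 (2*n+1) (int n + s))"
    by (subst SA_shift[symmetric, of _ "-1"]) (simp add: algebra_simps)
  also have "\<dots> = Sum_any (\<lambda>s. - (qX ^ (7*n+4)) * (dw s * gz 7 (2*n+1) (int n + s)))"
    by (rule Sum_any.cong, subst test4, simp only: mult_minus_left mult.assoc)
  also have "\<dots> = - (qX ^ (7*n+4)) * UJ n"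
    unfolding UJ_def by (rule SA_cmult) (rule fin_gz)
  finally show ?thesis by (simp add: algebra_simps)
qed

definition Pbad :: "nat \<Rightarrow> rat fls" where "Pbad n = (\<Prod>i<n. (1 - qX^(7*i+3)) * (1 - qX^(7*i+4)))"

lemma JTP: "TJ n = Pbad n"
proof (induction n)
  case 0
  have "TJ 0 = 1"
    unfolding TJ_def by (subst Sum_any.expand_superset[of "{0}"]) (auto simp: gz_def dw_def sg_def de_def split: if_splits)
  then show ?case by (simp add: Pbad_def)
next
  case (Suc n)
  show ?case using jstep2[of n] jstep1[of n] Suc by (simp add: Pbad_def mult.commute mult.left_commute)
qed

lemma fin_gz0: "finite {r. w r * gz e m r \<noteq> 0}"
  by (rule fin_supp[of _ 0 "int m"]) (auto dest!: gz_nz)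

lemma gz_nat: "gz e m (int k) = gb e m k" by (simp add: gz_def gb_def)

lemma gz_pascalB': "gz 2 (Suc m) k = qX powi (2 * (int m + 1 - k)) * gz 2 m (k-1) + gz 2 m k"
  using gz_pascalB[of 2 m k] by simp

definition L2 :: "nat \<Rightarrow> nat \<Rightarrow> rat fls" where
  "L2 K b = Sum_any (\<lambda>m. qX powi (2*(m^2 + int b*m)) / P 2 (nat m + b) * gz 2 K m)"

lemma durfee: "L2 K b = 1 / P 2 (K + b)"
proof (induction K arbitrary: b)
  case 0
  show ?case unfolding L2_def
    by (subst Sum_any.expand_superset[of "{0}"]) (auto simp: gz_def gb_def dest: gz_nz)
next
  case (Suc K)
  have ne: "P 2 a \<noteq> 0" for a by (rule P_ne0) simp
  have fin1: "finite {m. qX powi (2*(m^2 + int b*m)) / P 2 (nat m + b) * (qX powi (2 * (int K + 1 - m)) * gz 2 K (m-1)) \<noteq> 0}"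
    by (rule fin_supp[of _ 1 "int K + 1"]) (auto dest!: gz_nz)
  have "L2 (Suc K) b = Sum_any (\<lambda>m. qX powi (2*(m^2 + int b*m)) / P 2 (nat m + b) * (qX powi (2 * (int K + 1 - m)) * gz 2 K (m-1))) + L2 K b"
  proof -
    have pw: "qX powi (2*(m^2 + int b*m)) / P 2 (nat m + b) * gz 2 (Suc K) m = qX powi (2*(m^2 + int b*m)) / P 2 (nat m + b) * (qX powi (2 * (int K + 1 - m)) * gz 2 K (m-1)) + qX powi (2*(m^2 + int b*m)) / P 2 (nat m + b) * gz 2 K m" for m
      by (subst gz_pascalB') (rule distrib_left)
    show ?thesis unfolding L2_def pw by (rule SA_add) (rule fin1, rule fin_gz0)
  qed
  also have "Sum_any (\<lambda>m. qX powi (2*(m^2 + int b*m)) / P 2 (nat m + b) * (qX powi (2 * (int K + 1 - m)) * gz 2 K (m-1)))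
     = Sum_any (\<lambda>s. qX powi (2*((s+1)^2 + int b*(s+1))) / P 2 (nat (s+1) + b) * (qX powi (2 * (int K - s)) * gz 2 K s))"
    by (subst SA_shift[symmetric, of _ 1]) (simp add: algebra_simps)
  also have "\<dots> = Sum_any (\<lambda>s. qX ^ (2*(K+b+1)) * (qX powi (2*(s^2 + int (b+1)*s)) / P 2 (nat s + (b+1)) * gz 2 K s))"
  proof (rule Sum_any.cong)
    fix s
    show "qX powi (2*((s+1)^2 + int b*(s+1))) / P 2 (nat (s+1) + b) * (qX powi (2 * (int K - s)) * gz 2 K s) =
          qX ^ (2*(K+b+1)) * (qX powi (2*(s^2 + int (b+1)*s)) / P 2 (nat s + (b+1)) * gz 2 K s)"
    proof (cases "gz 2 K s = 0")
      case False
      then have s: "0 \<le> s" using gz_nz by blast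
      then have n: "nat (s+1) + b = nat s + (b+1)" by simp
      have ex: "2*((s+1)^2 + int b*(s+1)) + 2 * (int K - s) = 2*(s^2 + int (b+1)*s) + int (2*(K+b+1))"
        by (simp add: power2_eq_square algebra_simps)
      have "qX powi (2*((s+1)^2 + int b*(s+1))) * qX powi (2 * (int K - s)) = qX ^ (2*(K+b+1)) * qX powi (2*(s^2 + int (b+1)*s))"
        unfolding Xp_add Xp_nat Xp_add ex by (simp add: add.commute del: power_int_of_nat)
      then show ?thesis unfolding n by (simp add: field_simps)
    qed simp
  qed
  also have "\<dots> = qX ^ (2*(K+b+1)) * L2 K (b+1)"
    unfolding L2_def by (rule SA_cmult) (rule fin_gz0)
  finally have "L2 (Suc K) b = qX ^ (2*(K+b+1)) * (1 / P 2 (K + (b+1))) + 1 / P 2 (K+b)"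
    using Suc.IH by simp
  also have "\<dots> = 1 / P 2 (Suc K + b)"
  proof -
    have e1: "P 2 (Suc K + b) = P 2 (K+b) * (1 - qX^(2*(K+b+1)))" by (simp add: P_Suc)
    have e2: "P 2 (K + (b+1)) = P 2 (K+b) * (1 - qX^(2*(K+b+1)))" by (simp add: P_Suc)
    have gen: "x * (1 / (A*u)) + 1/A = 1/(A*u)" if "A \<noteq> 0" "u \<noteq> 0" "u = 1 - x" for A u x :: "rat fls"
    proof -
      have "x * (1/(A*u)) + 1/A = (x+u)/(A*u)" using that(1,2) by (simp add: field_simps)
      then show ?thesis using that(3) by simp
    qed
    show ?thesis unfolding e1 e2 by (rule gen[OF ne one_minus_X_ne0]) simp_all
  qed
  finally show ?case .
qed




lemma gz_eval: "0 \<le> k \<Longrightarrow> k \<le> int m \<Longrightarrow> gz e m k = P e m / (P e (nat k) * P e (m - nat k))"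
  by (simp add: gz_def gb_def nat_le_iff)

definition IN :: "nat \<Rightarrow> int \<Rightarrow> rat fls" where
  "IN N r = Sum_any (\<lambda>j. gz 2 N j * qX powi (2*j^2) * P 2 (nat j) / P 2 (2*nat j) * gz 2 (2*nat j) (j + r))"

lemma inner:
  fixes a N :: nat
  shows "IN N (int a) = qX powi (2 * int a^2) * P 2 N * gz 2 (2*N) (int N + int a) / P 2 (2*N)"
proof (cases "a \<le> N")
  case False
  have "IN N (int a) = Sum_any (\<lambda>j::int. 0)"
    unfolding IN_def
  proof (rule Sum_any.cong)
    fix j
    show "gz 2 N j * qX powi (2*j^2) * P 2 (nat j) / P 2 (2*nat j) * gz 2 (2*nat j) (j + int a) = 0"
    proof (cases "gz 2 N j = 0")
      case False
      then have "j \<le> int N" "0 \<le> j" using gz_nz by blast+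
      then have "\<not> (j + int a \<le> int (2 * nat j))" using \<open>\<not> a \<le> N\<close> by linarith
      then have "gz 2 (2*nat j) (j + int a) = 0" by (simp add: gz_def)
      then show ?thesis by simp
    qed simp
  qed
  moreover have "gz 2 (2*N) (int N + int a) = 0" using False by (simp add: gz_def)
  ultimately show ?thesis by simp
next
  case True
  define K where "K = N - a"
  have NK: "N = K + a" using True K_def by simp
  have ne: "P 2 m \<noteq> 0" for m by (rule P_ne0) simp
  have "IN N (int a) = Sum_any (\<lambda>s. gz 2 N (s + int a) * qX powi (2*(s + int a)^2) * P 2 (nat (s + int a)) / P 2 (2*nat (s + int a)) * gz 2 (2*nat (s + int a)) ((s + int a) + int a))"
    unfolding IN_def by (rule SA_shift[symmetric])
  also have "\<dots> = Sum_any (\<lambda>s. (qX powi (2 * int a^2) * P 2 N / P 2 K) * (qX powi (2*(s^2 + int (2*a)*s)) / P 2 (nat s + 2*a) * gz 2 K s))"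
  proof (rule Sum_any.cong)
    fix s
    show "gz 2 N (s + int a) * qX powi (2*(s + int a)^2) * P 2 (nat (s + int a)) / P 2 (2*nat (s + int a)) * gz 2 (2*nat (s + int a)) ((s + int a) + int a)
       = (qX powi (2 * int a^2) * P 2 N / P 2 K) * (qX powi (2*(s^2 + int (2*a)*s)) / P 2 (nat s + 2*a) * gz 2 K s)"
    proof (cases "0 \<le> s \<and> s \<le> int K")
      case False
      then consider "s < 0" | "s > int K" by linarith
      then show ?thesis
      proof cases
        case 1
        then have "gz 2 K s = 0" by (simp add: gz_def)
        moreover have "gz 2 N (s + int a) = 0 \<or> gz 2 (2*nat (s + int a)) ((s + int a) + int a) = 0"
        proof (cases "0 \<le> s + int a")
          case True
          then have "\<not> ((s + int a) + int a \<le> int (2*nat (s + int a)))" using 1 by linarith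
          then show ?thesis by (simp add: gz_def)
        qed (simp add: gz_def)
        ultimately show ?thesis by auto
      next
        case 2
        then have "gz 2 K s = 0" "gz 2 N (s + int a) = 0" using NK by (simp_all add: gz_def)
        then show ?thesis by simp
      qed
    next
      case True
      define t where "t = nat s"
      have s: "s = int t" using True t_def by simp
      have n1: "nat (s + int a) = t + a" "nat s = t" using s by auto
      have i1: "s + int a = int (t + a)" "s + int a + int a = int (t + 2*a)" using s by auto
      have e1: "gz 2 N (s + int a) = P 2 N / (P 2 (t + a) * P 2 (K - t))"
        unfolding i1 gz_nat gb_def using True s NK by auto
      have e2: "gz 2 (2*nat (s + int a)) ((s + int a) + int a) = P 2 (2*(t+a)) / (P 2 (t + 2*a) * P 2 t)"
        unfolding i1(2) unfolding n1 gz_nat gb_def by (simp add: nat_add_distrib)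
      have e3: "gz 2 K s = P 2 K / (P 2 t * P 2 (K - t))"
        unfolding s gz_nat gb_def using True s by auto
      have ex: "qX powi (2*(s + int a)^2) = qX powi (2 * int a^2) * qX powi (2*(s^2 + int (2*a)*s))"
        unfolding Xp_add by (rule arg_cong[where f="\<lambda>x. qX powi x"]) (simp add: power2_eq_square algebra_simps)
      have gen: "PN / (Pta * PKt) * (Y * Z) * Pta / P2 * (P2 / (Pt2a * Pt)) = (Y * PN / PK) * (Z / Pt2a * (PK / (Pt * PKt)))"
        if "Pta \<noteq> 0" "PKt \<noteq> 0" "P2 \<noteq> 0" "Pt2a \<noteq> 0" "Pt \<noteq> 0" "PK \<noteq> 0" for PN Pta PKt Y Z P2 Pt2a Pt PK :: "rat fls"
        using that by (simp add: field_simps)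
      show ?thesis unfolding e2 unfolding e1 e3 ex n1
        by (rule gen) (rule ne)+
    qed
  qed
  also have "\<dots> = (qX powi (2 * int a^2) * P 2 N / P 2 K) * L2 K (2*a)"
    unfolding L2_def by (rule SA_cmult) (rule fin_gz0)
  also have "\<dots> = qX powi (2 * int a^2) * P 2 N * gz 2 (2*N) (int N + int a) / P 2 (2*N)"
  proof -
    have i2: "int N + int a = int (K + 2*a)" using NK by simp
    have "gz 2 (2*N) (int N + int a) = P 2 (2*N) / (P 2 (K + 2*a) * P 2 K)"
      unfolding i2 gz_nat gb_def using NK by (simp add: mult.commute)
    moreover have gen: "Y * PN / PK * (1 / PKb) = Y * PN * (P2 / (PKb * PK)) / P2" if "PK \<noteq> 0" "PKb \<noteq> 0" "P2 \<noteq> 0" for Y PN PK PKb P2 :: "rat fls"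
      using that by (simp add: field_simps)
    ultimately show ?thesis unfolding durfee using ne by metis
  qed
  finally show ?thesis .
qed


lemma IN_sym: "IN N (-r) = IN N r"
  unfolding IN_def
proof (rule Sum_any.cong)
  fix j
  show "gz 2 N j * qX powi (2*j^2) * P 2 (nat j) / P 2 (2*nat j) * gz 2 (2*nat j) (j + - r) =
        gz 2 N j * qX powi (2*j^2) * P 2 (nat j) / P 2 (2*nat j) * gz 2 (2*nat j) (j + r)"
  proof (cases "0 \<le> j")
    case True
    have "gz 2 (2*nat j) (j + r) = gz 2 (2*nat j) (int (2*nat j) - (j + r))" by (rule gz_sym[symmetric])
    also have "int (2*nat j) - (j + r) = j + - r" using True by simp
    finally show ?thesis by simp
  qed (simp add: gz_def)
qed

lemma IN_val: "IN N r = qX powi (2*r^2) * P 2 N * gz 2 (2*N) (int N + r) / P 2 (2*N)"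
proof (cases "0 \<le> r")
  case True
  then show ?thesis using inner[of N "nat r"] by simp
next
  case False
  have "IN N r = IN N (- r)" by (simp add: IN_sym)
  also have "\<dots> = qX powi (2*r^2) * P 2 N * gz 2 (2*N) (int N - r) / P 2 (2*N)"
    using inner[of N "nat (-r)"] False by simp
  also have "gz 2 (2*N) (int N - r) = gz 2 (2*N) (int (2*N) - (int N - r))" by (rule gz_sym[symmetric])
  also have "int (2*N) - (int N - r) = int N + r" by simp
  finally show ?thesis .
qed

lemma FRS: "Sum_any (\<lambda>j. gz 2 N j * qX powi (2*j^2) * P 2 (nat j) / P 2 (2*nat j) * Podd (nat j))
   = P 2 N / P 2 (2*N) * Sum_any (\<lambda>r. dw r * gz 2 (2*N) (int N + r))"
proof -
  let ?w = "\<lambda>j. gz 2 N j * qX powi (2*j^2) * P 2 (nat j) / P 2 (2*nat j)"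
  have "Sum_any (\<lambda>j. ?w j * Podd (nat j)) = Sum_any (\<lambda>j. Sum_any (\<lambda>r. cw r * (?w j * gz 2 (2*nat j) (j + r))))"
  proof (rule Sum_any.cong)
    fix j
    show "?w j * Podd (nat j) = Sum_any (\<lambda>r. cw r * (?w j * gz 2 (2*nat j) (j + r)))"
    proof (cases "0 \<le> j")
      case True
      have "?w j * Podd (nat j) = ?w j * Sum_any (\<lambda>r. cw r * gz 2 (2*nat j) (j + r))"
        using True by (simp add: identI[symmetric] F1_def)
      also have "\<dots> = Sum_any (\<lambda>r. ?w j * (cw r * gz 2 (2*nat j) (j + r)))"
        by (rule SA_cmult[symmetric]) (rule fin_gz)
      finally show ?thesis by (simp add: ac_simps)
    qed (simp add: gz_def)
  qed
  also have "\<dots> = Sum_any (\<lambda>r. Sum_any (\<lambda>j. cw r * (?w j * gz 2 (2*nat j) (j + r))))"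
  proof (rule Sum_any.swap[of "{0..int N} \<times> {-int N..int N}"])
    show "{j. \<exists>r. cw r * (?w j * gz 2 (2*nat j) (j + r)) \<noteq> 0} \<times> {r. \<exists>j. cw r * (?w j * gz 2 (2*nat j) (j + r)) \<noteq> 0}
      \<subseteq> {0..int N} \<times> {-int N..int N}"
      by (auto dest!: gz_nz)
  qed simp
  also have "\<dots> = Sum_any (\<lambda>r. cw r * IN N r)"
    unfolding IN_def
  proof (rule Sum_any.cong)
    fix r
    show "Sum_any (\<lambda>j. cw r * (?w j * gz 2 (2*nat j) (j + r))) = cw r * Sum_any (\<lambda>j. ?w j * gz 2 (2*nat j) (j + r))"
      by (rule SA_cmult, rule fin_supp[of _ 0 "int N"]) (auto dest!: gz_nz)
  qed
  also have "\<dots> = Sum_any (\<lambda>r. P 2 N / P 2 (2*N) * (dw r * gz 2 (2*N) (int N + r)))"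
  proof (rule Sum_any.cong)
    fix r
    have "dw r = cw r * qX powi (2*r^2)"
      unfolding dw_def cw_def de_ce by (simp add: mult.assoc Xp_add)
    then show "cw r * IN N r = P 2 N / P 2 (2*N) * (dw r * gz 2 (2*N) (int N + r))"
      unfolding IN_val by simp
  qed
  also have "\<dots> = P 2 N / P 2 (2*N) * Sum_any (\<lambda>r. dw r * gz 2 (2*N) (int N + r))"
    by (rule SA_cmult) (rule fin_gz)
  finally show ?thesis .
qed



definition reg :: "rat fls \<Rightarrow> bool" where "reg f \<longleftrightarrow> (\<exists>g. f = fps_to_fls g)"
definition un :: "rat fls \<Rightarrow> bool" where "un f \<longleftrightarrow> (\<exists>g. f = fps_to_fls g \<and> g $ 0 \<noteq> 0)"
definition sm :: "nat \<Rightarrow> rat fls \<Rightarrow> bool" where "sm n f \<longleftrightarrow> (\<exists>g. f = fps_to_fls g \<and> (\<forall>i\<le>n. g $ i = 0))"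

lemma reg_0 [simp]: "reg 0" unfolding reg_def by (rule exI[of _ 0]) simp
lemma reg_1 [simp]: "reg 1" unfolding reg_def by (rule exI[of _ 1]) simp
lemma reg_add [intro]: "reg a \<Longrightarrow> reg b \<Longrightarrow> reg (a + b)" unfolding reg_def by (metis fps_to_fls_plus)
lemma reg_diff [intro]: "reg a \<Longrightarrow> reg b \<Longrightarrow> reg (a - b)" unfolding reg_def by (metis fps_to_fls_minus)
lemma reg_uminus [intro]: "reg a \<Longrightarrow> reg (- a)" unfolding reg_def by (metis fps_to_fls_uminus)
lemma reg_mult [intro]: "reg a \<Longrightarrow> reg b \<Longrightarrow> reg (a * b)" unfolding reg_def by (metis fls_times_fps_to_fls)
lemma reg_X [simp, intro]: "reg (qX ^ k)" unfolding reg_def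
  by (rule exI[of _ "fps_X ^ k"]) (simp add: fps_to_fls_power)
lemma reg_sum [intro]: "(\<And>i. i \<in> A \<Longrightarrow> reg (f i)) \<Longrightarrow> reg (sum f A)"
  by (induction A rule: infinite_finite_induct) auto
lemma reg_prod [intro]: "(\<And>i. i \<in> A \<Longrightarrow> reg (f i)) \<Longrightarrow> reg (prod f A)"
  by (induction A rule: infinite_finite_induct) auto
lemma reg_sg [simp,intro]: "reg (sg r)" unfolding sg_def by auto

lemma un_reg [intro]: "un a \<Longrightarrow> reg a" unfolding un_def reg_def by blast
lemma un_ne0: "un a \<Longrightarrow> a \<noteq> 0" unfolding un_def by auto
lemma un_1 [simp]: "un 1" unfolding un_def by (rule exI[of _ 1]) simp
lemma un_mult [intro]: "un a \<Longrightarrow> un b \<Longrightarrow> un (a * b)"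
  unfolding un_def by (metis fls_times_fps_to_fls fps_mult_nth_0 mult_eq_0_iff)
lemma un_inv [intro]: "un a \<Longrightarrow> un (inverse a)"
  unfolding un_def
proof (elim exE conjE)
  fix g assume g: "a = fps_to_fls g" "g $ 0 \<noteq> 0"
  then have "inverse a = fps_to_fls (inverse g)" by (simp add: fls_inverse_fps_to_fls)
  moreover have "inverse g $ 0 \<noteq> 0" using g by simp
  ultimately show "\<exists>g. inverse a = fps_to_fls g \<and> g $ 0 \<noteq> 0" by blast
qed
lemma un_prod [intro]: "(\<And>i. i \<in> A \<Longrightarrow> un (f i)) \<Longrightarrow> un (prod f A)"
  by (induction A rule: infinite_finite_induct) auto
lemma un_1mX [intro]: "0 < k \<Longrightarrow> un (1 - qX ^ k)"
  unfolding un_def by (rule exI[of _ "1 - fps_X ^ k"]) (simp add: fps_to_fls_power)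
lemma un_1pX [intro]: "0 < k \<Longrightarrow> un (1 + qX ^ k)"
  unfolding un_def by (rule exI[of _ "1 + fps_X ^ k"]) (simp add: fps_to_fls_power)
lemma un_P [intro]: "0 < e \<Longrightarrow> un (P e L)"
  unfolding P_def by (intro un_prod un_1mX) auto
lemma un_div [intro]: "un a \<Longrightarrow> un b \<Longrightarrow> un (a / b)"
  by (simp add: divide_inverse un_mult un_inv)

lemma sm_0 [simp]: "sm n 0" unfolding sm_def by (rule exI[of _ 0]) simp
lemma sm_add [intro]: "sm n a \<Longrightarrow> sm n b \<Longrightarrow> sm n (a + b)"
  unfolding sm_def by (metis add.right_neutral fps_add_nth fps_to_fls_plus)
lemma sm_uminus [intro]: "sm n a \<Longrightarrow> sm n (- a)"
  unfolding sm_def by (metis fps_neg_nth fps_to_fls_uminus neg_equal_0_iff_equal)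
lemma sm_diff [intro]: "sm n a \<Longrightarrow> sm n b \<Longrightarrow> sm n (a - b)"
  using sm_add[of n a "-b"] sm_uminus[of n b] by simp
lemma sm_multL [intro]: "reg a \<Longrightarrow> sm n b \<Longrightarrow> sm n (a * b)"
  unfolding sm_def reg_def
proof (elim exE conjE)
  fix g h assume a: "a = fps_to_fls g" and b: "b = fps_to_fls h" and h: "\<forall>i\<le>n. h $ i = 0"
  have "\<forall>i\<le>n. (g * h) $ i = 0" using h by (auto simp: fps_mult_nth intro!: sum.neutral)
  then show "\<exists>f. a * b = fps_to_fls f \<and> (\<forall>i\<le>n. f $ i = 0)" using a b by (metis fls_times_fps_to_fls)
qed
lemma sm_multR [intro]: "reg a \<Longrightarrow> sm n b \<Longrightarrow> sm n (b * a)"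
  using sm_multL by (simp add: mult.commute)
lemma sm_sum [intro]: "(\<And>i. i \<in> A \<Longrightarrow> sm n (f i)) \<Longrightarrow> sm n (sum f A)"
  by (induction A rule: infinite_finite_induct) auto
lemma sm_X [intro]: "n < k \<Longrightarrow> sm n (qX ^ k)"
  unfolding sm_def by (rule exI[of _ "fps_X ^ k"]) (simp add: fps_to_fls_power)
lemma sm_reg [intro]: "sm n a \<Longrightarrow> reg a" unfolding sm_def reg_def by blast

lemma sm_prod_1: "(\<And>i. i \<in> A \<Longrightarrow> reg (f i)) \<Longrightarrow> (\<And>i. i \<in> A \<Longrightarrow> sm n (f i - 1)) \<Longrightarrow> sm n (prod f A - 1)"
proof (induction A rule: infinite_finite_induct)
  case (insert x F)
  have "prod f (insert x F) - 1 = (f x - 1) * prod f F + (prod f F - 1)"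
    using insert by (simp add: algebra_simps)
  then show ?case using insert by (metis insert_iff reg_prod sm_add sm_multR)
qed auto

lemma sm_mult2: "sm n (a - a') \<Longrightarrow> sm n (b - b') \<Longrightarrow> reg a \<Longrightarrow> reg b' \<Longrightarrow> sm n (a * b - a' * b')"
proof -
  assume h: "sm n (a - a')" "sm n (b - b')" "reg a" "reg b'"
  have "a * b - a' * b' = a * (b - b') + (a - a') * b'" by (simp add: algebra_simps)
  then show ?thesis using h by auto
qed

lemma sm_inv2: "un a \<Longrightarrow> un b \<Longrightarrow> sm n (a - b) \<Longrightarrow> sm n (inverse a - inverse b)"
proof -
  assume h: "un a" "un b" "sm n (a - b)"
  then have "inverse a - inverse b = inverse a * inverse b * (- (a - b))"
    using un_ne0 by (simp add: field_simps)
  then show ?thesis using h by (metis reg_mult sm_multL sm_uminus un_inv un_reg)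
qed

lemma sm_trans: "sm n (a - b) \<Longrightarrow> sm n (b - c) \<Longrightarrow> sm n (a - c)"
  using sm_add[of n "a - b" "b - c"] by simp
lemma sm_sym: "sm n (a - b) \<Longrightarrow> sm n (b - a)"
  using sm_uminus[of n "a - b"] by simp

lemma P_close:
  assumes e: "0 < e" and n: "n < e*(a+1)" and ab: "a \<le> b"
  shows "sm n (P e b - P e a)"
  using ab
proof (induction b rule: dec_induct)
  case (step b)
  have "P e (Suc b) - P e a = (P e b - P e a) - P e b * qX^(e * Suc b)"
    by (simp add: P_Suc algebra_simps)
  moreover have "e*(a+1) \<le> e * Suc b" using step(1) by simp
  then have "n < e * Suc b" using n by linarith
  ultimately show ?case using step(3) un_P[OF e, of b] by (metis sm_X sm_diff sm_multL un_reg)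
qed simp

lemma P_close2:
  assumes "0 < e" "n < e*(min a b+1)" shows "sm n (P e a - P e b)"
proof (cases "a \<le> b")
  case True
  then show ?thesis using P_close[OF assms(1), of n a b] assms(2) by (simp add: min_def sm_sym)
next
  case False
  then show ?thesis using P_close[OF assms(1), of n b a] assms(2) by (simp add: min_def)
qed

lemma P_close_inv: "0 < e \<Longrightarrow> n < e*(min a b+1) \<Longrightarrow> sm n (inverse (P e a) - inverse (P e b))"
  by (rule sm_inv2) (auto intro: P_close2)



definition E :: "nat \<Rightarrow> rat fls" where "E L = (\<Prod>k\<in>{1..L}. (1 + qX^k))"
lemma E_0 [simp]: "E 0 = 1" by (simp add: E_def)
lemma E_Suc: "E (Suc L) = E L * (1 + qX ^ (Suc L))"
  by (simp add: E_def prod.cl_ivl_Suc)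

lemma EP1: "E L * P 1 L = P 2 L"
proof (induction L)
  case (Suc L)
  have "(1 + qX ^ Suc L) * (1 - qX ^ Suc L) = 1 - qX^(2 * Suc L)"
    by (simp add: algebra_simps power_mult_distrib flip: power_add mult_2)
  then show ?case using Suc by (simp add: E_Suc P_Suc) (metis mult.assoc mult.left_commute)
qed simp

lemma Podd_Suc: "Podd (Suc j) = Podd j * (1 - qX^(2*j+1))"
  by (simp add: Podd_def)

lemma E4: "E (2*j) * Podd j * P 2 j = P 2 (2*j)"
proof (induction j)
  case 0
  then show ?case by (simp add: Podd_def)
next
  case (Suc j)
  have a: "E (2 * Suc j) = E (2*j) * (1 + qX^(2*j+1)) * (1 + qX^(2*j+2))"
    by (simp add: E_Suc)
  have b: "P 2 (2 * Suc j) = P 2 (2*j) * (1 - qX^(2*(2*j+1))) * (1 - qX^(2*(2*j+2)))"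
    by (simp add: P_Suc)
  have c: "P 2 (Suc j) = P 2 j * (1 - qX^(2*j+2))" by (simp add: P_Suc)
  have d1: "(1 + qX^(2*j+1)) * (1 - qX^(2*j+1)) = 1 - qX^(2*(2*j+1))"
    by (simp add: algebra_simps flip: power_add mult_2)
  have d2: "(1 + qX^(2*j+2)) * (1 - qX^(2*j+2)) = 1 - qX^(2*(2*j+2))"
    by (simp add: algebra_simps flip: power_add mult_2)
  have "E (2 * Suc j) * Podd (Suc j) * P 2 (Suc j)
     = (E (2*j) * Podd j * P 2 j) * ((1 + qX^(2*j+1)) * (1 - qX^(2*j+1))) * ((1 + qX^(2*j+2)) * (1 - qX^(2*j+2)))"
    unfolding a c Podd_Suc by (simp only: ac_simps)
  also have "\<dots> = P 2 (2 * Suc j)" unfolding Suc d1 d2 b ..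
  finally show ?case .
qed

definition Good :: "nat \<Rightarrow> rat fls" where
  "Good N = (\<Prod>k\<in>{k\<in>{1..7*N}. k mod 7 \<notin> {0,3,4}}. (1 - qX^k))"

lemma Good_Suc: "Good (Suc N) = Good N * ((1 - qX^(7*N+1)) * (1 - qX^(7*N+2)) * (1 - qX^(7*N+5)) * (1 - qX^(7*N+6)))"
proof -
  have set: "{k\<in>{1..7*Suc N}. k mod 7 \<notin> {0,3,4}} = {k\<in>{1..7*N}. k mod 7 \<notin> {0,3,4}} \<union> {7*N+1, 7*N+2, 7*N+5, 7*N+6}"
    by (auto simp: mod_add_left_eq[symmetric]) (presburger+)
  have "Good (Suc N) = Good N * (\<Prod>k\<in>{7*N+1, 7*N+2, 7*N+5, 7*N+6}. (1 - qX^k))"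
    unfolding Good_def set by (rule prod.union_disjoint) auto
  then show ?thesis by (simp add: mult.assoc)
qed

lemma E5: "P 1 (7*N) = P 7 N * Pbad N * Good N"
proof (induction N)
  case 0 then show ?case by (simp add: Pbad_def Good_def)
next
  case (Suc N)
  have "P 1 (7 * Suc N) = P 1 (7*N) * ((1 - qX^(7*N+1)) * (1 - qX^(7*N+2)) * (1 - qX^(7*N+3)) * (1 - qX^(7*N+4)) * (1 - qX^(7*N+5)) * (1 - qX^(7*N+6)) * (1 - qX^(7*N+7)))"
    by (simp add: P_Suc eval_nat_numeral mult.assoc)
  moreover have "P 7 (Suc N) = P 7 N * (1 - qX^(7*N+7))" by (simp add: P_Suc add.commute)
  moreover have "Pbad (Suc N) = Pbad N * ((1 - qX^(7*N+3)) * (1 - qX^(7*N+4)))" by (simp add: Pbad_def)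
  ultimately show ?case using Suc by (simp add: Good_Suc ac_simps)
qed



lemma de_ge: "\<bar>r\<bar> \<le> de r"
proof -
  have "2*\<bar>r\<bar> \<le> 7*r^2 - r"
  proof (cases "r = 0")
    case False
    then have "1 \<le> \<bar>r\<bar>" by simp
    then have "\<bar>r\<bar> * 1 \<le> \<bar>r\<bar> * \<bar>r\<bar>" by (intro mult_left_mono) auto
    moreover have "\<bar>r\<bar> * \<bar>r\<bar> = r^2" by (simp add: power2_eq_square abs_mult_self_eq)
    moreover have "r \<le> \<bar>r\<bar>" by simp
    ultimately show ?thesis by linarith
  qed simp
  then show ?thesis unfolding de_def by linarith
qed

lemma dw_pow: "dw r = sg r * qX ^ (nat (de r))"
proof -
  have "0 \<le> de r" using de_ge[of r] by linarith
  then show ?thesis unfolding dw_def by (simp add: power_int_def)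
qed

lemma reg_dw [intro]: "reg (dw r)" unfolding dw_pow by auto
lemma sm_dw: "int n < de r \<Longrightarrow> sm n (dw r)"
  unfolding dw_pow by (rule sm_multL) auto

lemma gz_eval2: "\<bar>r\<bar> \<le> int N \<Longrightarrow> gz e (2*N) (int N + r) = P e (2*N) * inverse (P e (nat (int N + r))) * inverse (P e (nat (int N - r)))"
proof -
  assume r: "\<bar>r\<bar> \<le> int N"
  have 1: "2*N - nat (int N + r) = nat (int N - r)" using r by linarith
  have 2: "0 \<le> int N + r \<and> int N + r \<le> int (2*N)" using r by linarith
  have "gz e (2*N) (int N + r) = gb e (2*N) (nat (int N + r))" unfolding gz_def using 2 by simp
  also have "\<dots> = P e (2*N) / (P e (nat (int N + r)) * P e (nat (int N - r)))"
    unfolding gb_def 1[symmetric] using 2 by (simp add: nat_le_iff)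
  finally show ?thesis by (simp add: divide_inverse)
qed

lemma lt_e: "0 < (e::nat) \<Longrightarrow> n \<le> x \<Longrightarrow> n < e*(x+1)"
  using mult_le_mono1[of 1 e "x+1"] by simp

lemma BR:
  assumes e: "0 < e" and r: "\<bar>r\<bar> \<le> int n" and M: "N \<le> M" and N: "N = 2*n+2"
  shows "sm n (P e M * inverse (P e (nat (int N + r))) * inverse (P e (nat (int N - r))) - inverse (P e N))"
proof -
  have h1: "n < e * (min M N + 1)" using M N by (intro lt_e[OF e]) simp
  have "n \<le> nat (int N + r)" "n \<le> nat (int N - r)" using r N by (auto simp: le_nat_iff)
  then have h2: "n < e * (min (nat (int N + r)) N + 1)" "n < e * (min (nat (int N - r)) N + 1)"
    using N by (rule_tac lt_e[OF e], simp)+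
  have a: "sm n (P e M - P e N)" by (rule P_close2[OF e h1])
  have b: "sm n (inverse (P e (nat (int N + r))) - inverse (P e N))" by (rule P_close_inv[OF e h2(1)])
  have c: "sm n (inverse (P e (nat (int N - r))) - inverse (P e N))" by (rule P_close_inv[OF e h2(2)])
  have "sm n (P e M * inverse (P e (nat (int N + r))) - P e N * inverse (P e N))"
    by (rule sm_mult2[OF a b]) (use e in auto)
  then have "sm n (P e M * inverse (P e (nat (int N + r))) * inverse (P e (nat (int N - r))) - P e N * inverse (P e N) * inverse (P e N))"
    by (rule sm_mult2[OF _ c]) (use e in auto)
  moreover have "P e N * inverse (P e N) = 1" using P_ne0[OF e] by simp
  ultimately show ?thesis by simp
qed

definition Th :: "nat \<Rightarrow> rat fls" where "Th N = (\<Sum>r\<in>{-int N..int N}. dw r)"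
definition TA :: "nat \<Rightarrow> rat fls" where "TA N = (\<Sum>j\<in>{0..N}. qX^(2*j^2) * Podd j / P 2 (2*j))"

lemma SA_range: "Sum_any (\<lambda>r. dw r * gz e (2*N) (int N + r)) = (\<Sum>r\<in>{-int N..int N}. dw r * gz e (2*N) (int N + r))"
  by (rule Sum_any.expand_superset) (auto dest!: gz_nz)

lemma sm_dw_term:
  assumes N: "N = 2*n+2" and r: "r \<in> {-int N..int N}"
    and br: "\<bar>r\<bar> \<le> int n \<Longrightarrow> sm n (X - inverse (P e N))" and e: "0 < e" and reg: "reg X"
  shows "sm n (dw r * X - dw r * inverse (P e N))"
proof (cases "int n < de r")
  case True
  then show ?thesis using sm_dw[OF True] reg e by (intro sm_diff) (auto intro: un_reg)
next
  case False
  then have "\<bar>r\<bar> \<le> int n" using de_ge[of r] by linarith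
  then have "sm n (dw r * (X - inverse (P e N)))" using br by auto
  then show ?thesis by (simp add: algebra_simps)
qed

lemma SR_approx:
  assumes N: "N = 2*n+2"
  shows "sm n (P 2 N / P 2 (2*N) * Sum_any (\<lambda>r. dw r * gz 2 (2*N) (int N + r)) - Th N * inverse (P 2 N))"
proof -
  have "P 2 N / P 2 (2*N) * Sum_any (\<lambda>r. dw r * gz 2 (2*N) (int N + r)) - Th N * inverse (P 2 N)
     = (\<Sum>r\<in>{-int N..int N}. dw r * (P 2 N / P 2 (2*N) * gz 2 (2*N) (int N + r)) - dw r * inverse (P 2 N))"
    unfolding SA_range Th_def sum_distrib_left sum_distrib_right sum_subtractf by (simp add: ac_simps)
  also have "sm n \<dots>"
  proof (rule sm_sum)
    fix r assume r: "r \<in> {-int N..int N}"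
    then have rr: "\<bar>r\<bar> \<le> int N" by auto
    have ev: "P 2 N / P 2 (2*N) * gz 2 (2*N) (int N + r) = P 2 N * inverse (P 2 (nat (int N + r))) * inverse (P 2 (nat (int N - r)))"
      unfolding gz_eval2[OF rr] using P_ne0[of 2 "2*N"] by (simp add: field_simps)
    show "sm n (dw r * (P 2 N / P 2 (2*N) * gz 2 (2*N) (int N + r)) - dw r * inverse (P 2 N))"
    proof (rule sm_dw_term[OF N r])
      show "\<bar>r\<bar> \<le> int n \<Longrightarrow> sm n (P 2 N / P 2 (2*N) * gz 2 (2*N) (int N + r) - inverse (P 2 N))"
        unfolding ev by (rule BR[OF _ _ _ N]) auto
      show "reg (P 2 N / P 2 (2*N) * gz 2 (2*N) (int N + r))"
        unfolding ev by (intro reg_mult un_reg un_inv un_P) auto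
    qed simp
  qed
  finally show ?thesis .
qed

lemma JT_approx:
  assumes N: "N = 2*n+2"
  shows "sm n (Pbad N - Th N * inverse (P 7 N))"
proof -
  have "Pbad N - Th N * inverse (P 7 N)
     = (\<Sum>r\<in>{-int N..int N}. dw r * gz 7 (2*N) (int N + r) - dw r * inverse (P 7 N))"
    unfolding JTP[symmetric] TJ_def SA_range Th_def sum_distrib_right sum_subtractf ..
  also have "sm n \<dots>"
  proof (rule sm_sum)
    fix r assume r: "r \<in> {-int N..int N}"
    then have rr: "\<bar>r\<bar> \<le> int N" by auto
    show "sm n (dw r * gz 7 (2*N) (int N + r) - dw r * inverse (P 7 N))"
    proof (rule sm_dw_term[OF N r])
      show "\<bar>r\<bar> \<le> int n \<Longrightarrow> sm n (gz 7 (2*N) (int N + r) - inverse (P 7 N))"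
        unfolding gz_eval2[OF rr] by (rule BR[OF _ _ _ N]) auto
      show "reg (gz 7 (2*N) (int N + r))"
        unfolding gz_eval2[OF rr] by (intro reg_mult un_reg un_inv un_P) auto
    qed simp
  qed
  finally show ?thesis .
qed

lemma reg_Podd [intro]: "reg (Podd j)" unfolding Podd_def by (rule reg_prod, rule reg_diff, rule reg_1, rule reg_X)

lemma sum_int_nat: "(\<Sum>j\<in>{0..int N}. f j) = (\<Sum>j\<in>{0..N}. f (int j))"
proof -
  have "{0..int N} = int ` {0..N}" by (simp add: image_int_atLeastAtMost)
  then show ?thesis by (simp add: sum.reindex)
qed

lemma SL_approx:
  assumes N: "N = 2*n+2"
  shows "sm n (Sum_any (\<lambda>j. gz 2 N j * qX powi (2*j^2) * P 2 (nat j) / P 2 (2*nat j) * Podd (nat j)) - TA N)"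
proof -
  have "Sum_any (\<lambda>j. gz 2 N j * qX powi (2*j^2) * P 2 (nat j) / P 2 (2*nat j) * Podd (nat j))
      = (\<Sum>j\<in>{0..int N}. gz 2 N j * qX powi (2*j^2) * P 2 (nat j) / P 2 (2*nat j) * Podd (nat j))"
    by (rule Sum_any.expand_superset) (auto dest!: gz_nz)
  also have "\<dots> = (\<Sum>j\<in>{0..N}. (qX^(2*j^2) * Podd j / P 2 (2*j)) * (P 2 N * inverse (P 2 (N - j))))"
    unfolding sum_int_nat
  proof (rule sum.cong)
    fix j assume j: "j \<in> {0..N}"
    have g: "gz 2 N (int j) = P 2 N / (P 2 j * P 2 (N - j))" using j by (simp add: gz_nat gb_def)
    have x: "qX powi (2*(int j)^2) = qX^(2*j^2)"
    proof -
      have "2*(int j)^2 = int (2*j^2)" by simp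
      then show ?thesis by (simp only: power_int_of_nat)
    qed
    show "gz 2 N (int j) * qX powi (2*(int j)^2) * P 2 (nat (int j)) / P 2 (2*nat (int j)) * Podd (nat (int j)) =
          (qX^(2*j^2) * Podd j / P 2 (2*j)) * (P 2 N * inverse (P 2 (N - j)))"
      unfolding g x using P_ne0[of 2 j] by (simp add: field_simps)
  qed simp
  finally have eq: "Sum_any (\<lambda>j. gz 2 N j * qX powi (2*j^2) * P 2 (nat j) / P 2 (2*nat j) * Podd (nat j)) - TA N
      = (\<Sum>j\<in>{0..N}. (qX^(2*j^2) * Podd j / P 2 (2*j)) * (P 2 N * inverse (P 2 (N - j))) - qX^(2*j^2) * Podd j / P 2 (2*j))"
    unfolding TA_def sum_subtractf by simp
  show ?thesis unfolding eq
  proof (rule sm_sum)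
    fix j assume j: "j \<in> {0..N}"
    have reg1: "reg (Podd j / P 2 (2*j))" unfolding divide_inverse by (rule reg_mult[OF reg_Podd un_reg[OF un_inv[OF un_P]]]) simp
    have reg2: "reg (P 2 N * inverse (P 2 (N - j)) - 1)"
      by (rule reg_diff[OF reg_mult[OF un_reg[OF un_P] un_reg[OF un_inv[OF un_P]]] reg_1]) simp_all
    have e: "(qX^(2*j^2) * Podd j / P 2 (2*j)) * (P 2 N * inverse (P 2 (N - j))) - qX^(2*j^2) * Podd j / P 2 (2*j)
      = qX^(2*j^2) * ((Podd j / P 2 (2*j)) * (P 2 N * inverse (P 2 (N - j)) - 1))" by (simp add: algebra_simps)
    show "sm n ((qX^(2*j^2) * Podd j / P 2 (2*j)) * (P 2 N * inverse (P 2 (N - j))) - qX^(2*j^2) * Podd j / P 2 (2*j))"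
      unfolding e
    proof (cases "n < 2*j^2")
      case True
      then show "sm n (qX^(2*j^2) * ((Podd j / P 2 (2*j)) * (P 2 N * inverse (P 2 (N - j)) - 1)))"
        using reg1 reg2 by (intro sm_multR sm_X reg_mult) auto
    next
      case False
      then have "j \<le> n" by (metis le_square le_trans not_less power2_eq_square mult_le_mono2 nat_mult_1 one_le_numeral mult.commute le_add1)
      then have h: "n < 2 * (min N (N - j) + 1)" using N by simp
      have "P 2 N * inverse (P 2 (N - j)) - 1 = (P 2 N - P 2 (N - j)) * inverse (P 2 (N - j))"
        using P_ne0[of 2 "N-j"] by (simp add: algebra_simps)
      moreover have "sm n (P 2 N - P 2 (N - j))" by (rule P_close2[OF _ h]) simp
      ultimately have "sm n (P 2 N * inverse (P 2 (N - j)) - 1)" by (auto intro!: sm_multR un_reg un_inv un_P)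
      then show "sm n (qX^(2*j^2) * ((Podd j / P 2 (2*j)) * (P 2 N * inverse (P 2 (N - j)) - 1)))"
        using reg1 by (intro sm_multL reg_mult) auto
    qed
  qed
qed

lemma TA_approx:
  assumes N: "N = 2*n+2"
  shows "sm n (TA N - P 7 N * Pbad N * inverse (P 2 N))"
proof -
  have 0: "sm n (TA N - P 2 N / P 2 (2*N) * Sum_any (\<lambda>r. dw r * gz 2 (2*N) (int N + r)))"
    using sm_sym[OF SL_approx[OF N]] unfolding FRS .
  have 1: "sm n (TA N - Th N * inverse (P 2 N))"
    using sm_trans[OF 0 SR_approx[OF N]] .
  have "Th N - P 7 N * Pbad N = - (P 7 N * (Pbad N - Th N * inverse (P 7 N)))"
    using P_ne0[of 7 N] by (simp add: algebra_simps)
  then have "sm n (Th N - P 7 N * Pbad N)" using JT_approx[OF N] by (auto intro!: sm_multL un_reg un_P)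
  then have "sm n ((Th N - P 7 N * Pbad N) * inverse (P 2 N))" by (auto intro!: sm_multR un_reg un_inv un_P)
  then have "sm n (Th N * inverse (P 2 N) - P 7 N * Pbad N * inverse (P 2 N))" by (simp add: algebra_simps)
  then show ?thesis using 1 sm_trans by blast
qed



definition FJf :: "nat \<Rightarrow> nat \<Rightarrow> rat fls" where
  "FJf j k = (if k \<le> 2*j then (if odd k then qX^(2*k) else inverse (1 - qX^k)) else 1 + qX^k)"

lemma E1: "(\<Prod>k\<in>{1..2*j}. (if odd k then qX^(2*k) else inverse (1 - qX^k))) = qX^(2*j^2) * inverse (P 2 j)"
proof (induction j)
  case 0 then show ?case by simp
next
  case (Suc j)
  have "{1..2 * Suc j} = insert (2*j+2) (insert (2*j+1) {1..2*j})" by auto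
  then have "(\<Prod>k\<in>{1..2*Suc j}. (if odd k then qX^(2*k) else inverse (1 - qX^k)))
     = inverse (1 - qX^(2*j+2)) * (qX^(2*(2*j+1)) * (\<Prod>k\<in>{1..2*j}. (if odd k then qX^(2*k) else inverse (1 - qX^k))))"
    by simp
  also have "\<dots> = qX^(2*(Suc j)^2) * inverse (P 2 (Suc j))"
  proof -
    have "2*(Suc j)^2 = 2*(2*j+1) + 2*j^2" by (simp add: power2_eq_square)
    moreover have "P 2 (Suc j) = P 2 j * (1 - qX^(2*j+2))" by (simp add: P_Suc)
    ultimately show ?thesis unfolding Suc by (simp add: power_add ac_simps)
  qed
  finally show ?case .
qed

lemma un_E [intro]: "un (E L)" unfolding E_def by (intro un_prod un_1pX) auto
lemma un_Podd [intro]: "un (Podd j)" unfolding Podd_def by (intro un_prod un_1mX) auto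
lemma un_Pbad [intro]: "un (Pbad j)" unfolding Pbad_def by (intro un_prod un_mult un_1mX) auto
lemma un_Good [intro]: "un (Good j)" unfolding Good_def by (intro un_prod un_1mX) auto

lemma GA_term: "j \<le> N \<Longrightarrow> (\<Prod>k\<in>{1..2*N}. FJf j k) = E (2*N) * (qX^(2*j^2) * Podd j / P 2 (2*j))"
proof -
  assume j: "j \<le> N"
  have split: "prod f {1..2*N} = prod f {1..2*j} * prod f {2*j+1..2*N}" for f :: "nat \<Rightarrow> rat fls"
    using prod.ub_add_nat[of 1 "2*j" f "2*N - 2*j"] j by simp
  have a: "(\<Prod>k\<in>{1..2*j}. FJf j k) = qX^(2*j^2) * inverse (P 2 j)"
    unfolding E1[symmetric] FJf_def by (rule prod.cong) auto
  have b: "(\<Prod>k\<in>{2*j+1..2*N}. FJf j k) = (\<Prod>k\<in>{2*j+1..2*N}. (1 + qX^k))"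
    unfolding FJf_def by (rule prod.cong) auto
  have c: "E (2*N) = E (2*j) * (\<Prod>k\<in>{2*j+1..2*N}. (1 + qX^k))" unfolding E_def by (rule split)
  have d: "E (2*j) * Podd j * P 2 j = P 2 (2*j)" by (rule E4)
  have ne: "E (2*j) \<noteq> 0" "Podd j \<noteq> 0" "P 2 j \<noteq> 0" by (auto intro!: un_ne0)
  show ?thesis unfolding split[of "FJf j"] a b c d[symmetric] using ne by (simp add: field_simps)
qed

lemma GA_eq: "(\<Sum>j\<in>{0..N}. (\<Prod>k\<in>{1..2*N}. FJf j k)) = E (2*N) * TA N"
  unfolding TA_def sum_distrib_left by (rule sum.cong, rule refl, rule GA_term, simp)

definition FCf :: "nat \<Rightarrow> rat fls" where
  "FCf k = (if k mod 7 \<in> {0,3,4} then 1 else inverse (1 - qX^k))"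

lemma GC_eq: "(\<Prod>k\<in>{1..7*N}. FCf k) = P 7 N * Pbad N * inverse (P 1 (7*N))"
proof -
  have "(\<Prod>k\<in>{1..7*N}. FCf k) = (\<Prod>k\<in>{k\<in>{1..7*N}. k mod 7 \<notin> {0,3,4}}. inverse (1 - qX^k))"
    unfolding FCf_def by (subst prod.inter_filter) (auto intro!: prod.cong)
  also have "\<dots> = inverse (Good N)" unfolding Good_def by (simp add: prod_inversef[symmetric] o_def)
  also have "\<dots> = P 7 N * Pbad N * inverse (P 1 (7*N))"
    unfolding E5 using un_ne0[OF un_P[of 7 N]] un_ne0[OF un_Pbad[of N]] by (simp add: field_simps)
  finally show ?thesis .
qed

lemma main_fls:
  assumes N: "N = 2*n+2"
  shows "sm n ((\<Sum>j\<in>{0..N}. (\<Prod>k\<in>{1..2*N}. FJf j k)) - (\<Prod>k\<in>{1..7*N}. FCf k))"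
proof -
  have 1: "sm n (E (2*N) * TA N - E (2*N) * (P 7 N * Pbad N * inverse (P 2 N)))"
    using TA_approx[OF N] by (subst right_diff_distrib[symmetric]) (auto intro!: sm_multL)
  have e: "E (2*N) = P 2 (2*N) * inverse (P 1 (2*N))"
    using EP1[of "2*N"] un_ne0[OF un_P[of 1 "2*N"]] by (simp add: field_simps)
  have 2: "sm n (P 2 (2*N) * inverse (P 2 N) - 1)"
  proof -
    have "sm n ((P 2 (2*N) - P 2 N) * inverse (P 2 N))"
      by (rule sm_multR) (auto intro!: P_close2 lt_e un_reg un_inv un_P simp: N)
    then show ?thesis using un_ne0[OF un_P[of 2 N]] by (simp add: algebra_simps)
  qed
  have 3: "sm n (inverse (P 1 (2*N)) - inverse (P 1 (7*N)))"
    by (rule P_close_inv) (auto simp: N)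
  have 4: "sm n (P 2 (2*N) * inverse (P 2 N) * inverse (P 1 (2*N)) - 1 * inverse (P 1 (7*N)))"
    by (rule sm_mult2[OF 2 3]) (auto intro!: reg_mult un_reg un_inv un_P)
  have 5: "sm n (P 7 N * Pbad N * (P 2 (2*N) * inverse (P 2 N) * inverse (P 1 (2*N)) - 1 * inverse (P 1 (7*N))))"
    by (rule sm_multL[OF _ 4]) (auto intro!: reg_mult un_reg un_P un_Pbad)
  have "E (2*N) * (P 7 N * Pbad N * inverse (P 2 N)) - P 7 N * Pbad N * inverse (P 1 (7*N))
     = P 7 N * Pbad N * (P 2 (2*N) * inverse (P 2 N) * inverse (P 1 (2*N)) - 1 * inverse (P 1 (7*N)))"
    unfolding e by (simp add: algebra_simps)
  with 5 have "sm n (E (2*N) * (P 7 N * Pbad N * inverse (P 2 N)) - P 7 N * Pbad N * inverse (P 1 (7*N)))" by simp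
  from sm_trans[OF 1 this] show ?thesis unfolding GA_eq GC_eq .
qed



definition SS :: "(nat \<Rightarrow> nat set) \<Rightarrow> nat set \<Rightarrow> nat \<Rightarrow> nat multiset set" where
  "SS M T n = {p. set_mset p \<subseteq> T \<and> (\<forall>k\<in>T. count p k \<in> M k) \<and> sum_mset p = n}"

definition FF :: "(nat \<Rightarrow> nat set) \<Rightarrow> nat \<Rightarrow> rat fps" where
  "FF M k = Abs_fps (\<lambda>i. if k dvd i \<and> i div k \<in> M k then 1 else 0)"

lemma size_le_sum: "0 \<notin> set_mset p \<Longrightarrow> size p \<le> sum_mset p"
proof (induction p)
  case (add x p)
  then show ?case by (cases x) auto
qed simp

lemma finite_SS: "finite T \<Longrightarrow> 0 \<notin> T \<Longrightarrow> finite (SS M T n)"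
proof -
  assume T: "finite T" "0 \<notin> T"
  have "SS M T n \<subseteq> (\<Union>s\<in>{0..n}. multisets_of_size T s)"
  proof
    fix p assume "p \<in> SS M T n"
    then have "set_mset p \<subseteq> T" "sum_mset p = n" by (auto simp: SS_def)
    moreover then have "size p \<le> n" using T size_le_sum[of p] by auto
    ultimately show "p \<in> (\<Union>s\<in>{0..n}. multisets_of_size T s)" by (auto simp: multisets_of_size_def)
  qed
  moreover have "finite (\<Union>s\<in>{0..n}. multisets_of_size T s)" using T(1) by (intro finite_UN_I) auto
  ultimately show ?thesis by (rule finite_subset)
qed

lemma comb:
  assumes "finite T" "0 \<notin> T"
  shows "of_nat (card (SS M T n)) = (\<Prod>k\<in>T. FF M k) $ n"
  using assms
proof (induction T arbitrary: n rule: finite_induct)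
  case empty
  have "SS M {} n = (if n = 0 then {{#}} else {})" by (auto simp: SS_def)
  then show ?case by simp
next
  case (insert a T)
  have a: "0 < a" using insert by auto
  have T0: "0 \<notin> T" using insert by auto
  define I where "I = {i\<in>{0..n}. a dvd i \<and> i div a \<in> M a}"
  have "(\<Prod>k\<in>insert a T. FF M k) $ n = (FF M a * (\<Prod>k\<in>T. FF M k)) $ n" using insert by simp
  also have "\<dots> = (\<Sum>i\<in>{0..n}. (if a dvd i \<and> i div a \<in> M a then 1 else 0) * of_nat (card (SS M T (n - i))))"
    by (simp add: fps_mult_nth FF_def insert.IH[OF T0] atLeast0AtMost)
  also have "\<dots> = (\<Sum>i\<in>{0..n}. if a dvd i \<and> i div a \<in> M a then of_nat (card (SS M T (n - i))) else 0)"
    by (rule sum.cong) auto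
  also have "\<dots> = (\<Sum>i\<in>I. of_nat (card (SS M T (n - i))))"
    unfolding I_def by (rule sum.inter_filter[symmetric]) simp
  also have "\<dots> = of_nat (\<Sum>i\<in>I. card (SS M T (n - i)))" by simp
  also have "(\<Sum>i\<in>I. card (SS M T (n - i))) = card (SIGMA i:I. SS M T (n - i))"
    by (rule card_SigmaI[symmetric]) (auto simp: I_def intro: finite_SS[OF insert(1) T0])
  also have "card (SIGMA i:I. SS M T (n - i)) = card (SS M (insert a T) n)"
  proof (rule bij_betw_same_card)
    let ?f = "\<lambda>(i, q). q + replicate_mset (i div a) a"
    let ?g = "\<lambda>p. (a * count p a, {#x \<in># p. x \<noteq> a#})"
    show "bij_betw ?f (SIGMA i:I. SS M T (n - i)) (SS M (insert a T) n)"
    proof (rule bij_betw_byWitness[where f' = ?g])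
      show "\<forall>x\<in>(SIGMA i:I. SS M T (n - i)). ?g (?f x) = x"
      proof
        fix x assume x: "x \<in> (SIGMA i:I. SS M T (n - i))"
        obtain i q where iq: "x = (i, q)" "i \<in> I" "q \<in> SS M T (n - i)" using x by auto
        have "count q a = 0" using iq(3) insert(2) by (auto simp: SS_def count_eq_zero_iff)
        moreover have "a * (i div a) = i" using iq(2) by (auto simp: I_def)
        moreover have "{#x \<in># q. x \<noteq> a#} = q" using \<open>count q a = 0\<close> by (auto simp: filter_mset_eq_conv count_eq_zero_iff)
        ultimately show "?g (?f x) = x" using iq(1) by simp
      qed
      show "\<forall>p\<in>SS M (insert a T) n. ?f (?g p) = p"
      proof
        fix p
        have "p = {#x \<in># p. x \<noteq> a#} + {#x \<in># p. x = a#}" by (metis multiset_partition add.commute)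
        then show "?f (?g p) = p" using a by (simp add: filter_eq_replicate_mset)
      qed
      show "?f ` (SIGMA i:I. SS M T (n - i)) \<subseteq> SS M (insert a T) n"
      proof
        fix y assume "y \<in> ?f ` (SIGMA i:I. SS M T (n - i))"
        then obtain i q where iq: "y = q + replicate_mset (i div a) a" "i \<in> I" "q \<in> SS M T (n - i)" by auto
        have ca: "count q a = 0" using iq(3) insert(2) by (auto simp: SS_def count_eq_zero_iff)
        have i: "a * (i div a) = i" "i \<le> n" "i div a \<in> M a" using iq(2) by (auto simp: I_def)
        show "y \<in> SS M (insert a T) n"
          using iq(3) ca i unfolding iq(1) SS_def by (auto simp: mult.commute)
      qed
      show "?g ` SS M (insert a T) n \<subseteq> (SIGMA i:I. SS M T (n - i))"
      proof
        fix z assume "z \<in> ?g ` SS M (insert a T) n"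
        then obtain p where p: "z = ?g p" "p \<in> SS M (insert a T) n" by auto
        have ps: "set_mset p \<subseteq> insert a T" "\<forall>k\<in>insert a T. count p k \<in> M k" "sum_mset p = n"
          using p(2) by (auto simp: SS_def)
        have split: "p = {#x \<in># p. x \<noteq> a#} + replicate_mset (count p a) a"
          by (metis multiset_partition add.commute filter_eq_replicate_mset)
        have sm: "sum_mset p = sum_mset {#x \<in># p. x \<noteq> a#} + a * count p a"
          by (subst split) simp
        have "a * count p a \<in> I" using ps sm a by (auto simp: I_def)
        moreover have "{#x \<in># p. x \<noteq> a#} \<in> SS M T (n - a * count p a)"
          using ps sm insert(2) by (auto simp: SS_def)
        ultimately show "z \<in> (SIGMA i:I. SS M T (n - i))" using p(1) by simp
      qed
    qed
  qed
  finally show ?case ..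
qed



lemma dvd_div_eq: "0 < (k::nat) \<Longrightarrow> (k dvd i \<and> i div k = m) \<longleftrightarrow> i = m * k"
proof
  assume "0 < k" "k dvd i \<and> i div k = m"
  then show "i = m * k" by (metis dvd_div_mult_self)
qed simp

lemma FF_two: "0 < k \<Longrightarrow> M k = {2} \<Longrightarrow> FF M k = fps_X^(2*k)"
  unfolding FF_def by (rule fps_ext) (simp add: fps_X_power_nth dvd_div_eq mult.commute)

lemma FF_01: "0 < k \<Longrightarrow> M k = {0,1} \<Longrightarrow> FF M k = 1 + fps_X^k"
proof (rule fps_ext)
  fix i assume k: "0 < k" "M k = {0,1}"
  show "FF M k $ i = (1 + fps_X^k) $ i"
  proof -
    have "(k dvd i \<and> i div k \<in> {0,1}) \<longleftrightarrow> (i = 0 \<or> i = k)"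
      using dvd_div_eq[OF k(1), of i 0] dvd_div_eq[OF k(1), of i 1] by auto
    then show ?thesis unfolding FF_def using k by (simp add: fps_X_power_nth)
  qed
qed

lemma FF_0: "0 < k \<Longrightarrow> M k = {0} \<Longrightarrow> FF M k = 1"
  unfolding FF_def by (rule fps_ext) (simp add: dvd_div_eq)

lemma FF_univ: "0 < k \<Longrightarrow> M k = UNIV \<Longrightarrow> FF M k = inverse (1 - fps_X^k)"
proof -
  assume k: "0 < k" "M k = UNIV"
  have "(1 - fps_X^k) * FF M k = 1"
  proof (rule fps_ext)
    fix i
    have "(1 - fps_X^k) * FF M k = FF M k - fps_X^k * FF M k" by (simp add: algebra_simps)
    moreover have "(FF M k - fps_X^k * FF M k) $ i = (1::rat fps) $ i"
    proof (cases "i < k")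
      case True
      then have "k dvd i \<longleftrightarrow> i = 0" using k by (auto dest: dvd_imp_le)
      then show ?thesis using True k by (simp add: fps_X_power_mult_nth FF_def)
    next
      case False
      then have "k dvd (i - k) \<longleftrightarrow> k dvd i" by (simp add: dvd_minus_self)
      then show ?thesis using False k by (simp add: fps_X_power_mult_nth FF_def)
    qed
    ultimately show "((1 - fps_X^k) * FF M k) $ i = (1::rat fps) $ i" by simp
  qed
  then show ?thesis by (rule fps_inverse_unique[symmetric])
qed

lemma fps_to_fls_prod: "fps_to_fls (prod f A) = (\<Prod>x\<in>A. fps_to_fls (f x))"
  by (induction A rule: infinite_finite_induct) (auto simp: fls_times_fps_to_fls)
lemma fps_to_fls_sum: "fps_to_fls (sum f A) = (\<Sum>x\<in>A. fps_to_fls (f x))"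
  by (induction A rule: infinite_finite_induct) auto

lemma fls_inv_1mX: "0 < k \<Longrightarrow> fps_to_fls (inverse (1 - fps_X^k :: rat fps)) = inverse (1 - qX^k)"
proof -
  assume k: "0 < k"
  have "subdegree (1 - fps_X^k :: rat fps) = 0" using k by (intro subdegree_eq_0) simp
  then show ?thesis by (simp add: fls_inverse_fps_to_fls[symmetric] fps_to_fls_power)
qed

definition MJ :: "nat \<Rightarrow> nat \<Rightarrow> nat set" where
  "MJ j k = (if k \<le> 2*j then (if odd k then {2} else UNIV) else {0,1})"
definition MC :: "nat \<Rightarrow> nat set" where
  "MC k = (if k mod 7 \<in> {0,3,4} then {0} else UNIV)"

lemma mem_le_sum: "x \<in># p \<Longrightarrow> x \<le> sum_mset (p :: nat multiset)"
proof -
  assume "x \<in># p"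
  then obtain q where "p = add_mset x q" by (blast dest: multi_member_split)
  then show ?thesis by simp
qed

lemma A3_iff:
  assumes N: "N = 2*n+2"
  shows "(p \<in> partitions n \<and> A3_cond p) \<longleftrightarrow> (\<exists>j\<in>{0..N}. p \<in> SS (MJ j) {1..2*N} n)"
proof
  assume h: "p \<in> partitions n \<and> A3_cond p"
  then have pos: "\<forall>x\<in>#p. 0 < x" and sm: "sum_mset p = n" by (auto simp: partitions_def)
  from h obtain j where j1: "\<forall>i. 1 \<le> i \<and> i \<le> j \<longrightarrow> count p (2*i - 1) = 2"
    and j2: "\<forall>k. k > 2*j \<longrightarrow> count p k \<le> 1" by (auto simp: A3_cond_def)
  have jN: "j \<le> N"
  proof (cases "j = 0")
    case False
    then have "count p (2*j - 1) = 2" using j1 by auto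
    then have "2*j - 1 \<in># p" by (metis not_in_iff zero_neq_numeral)
    then have "2*j - 1 \<le> n" using mem_le_sum sm by metis
    then show ?thesis using N by simp
  qed simp
  have "p \<in> SS (MJ j) {1..2*N} n"
    unfolding SS_def
  proof (intro CollectI conjI ballI)
    show "set_mset p \<subseteq> {1..2*N}"
    proof
      fix x assume x: "x \<in># p"
      have "0 < x" using pos x by blast
      moreover have "x \<le> n" using mem_le_sum[OF x] sm by simp
      ultimately show "x \<in> {1..2*N}" using N by simp
    qed
    show "sum_mset p = n" by (rule sm)
    fix k assume k: "k \<in> {1..2*N}"
    show "count p k \<in> MJ j k"
    proof (cases "k \<le> 2*j")
      case True
      show ?thesis
      proof (cases "odd k")
        case True
        then obtain b where "k = 2*b + 1" using oddE by blast
        then have i: "k = 2*(b+1) - 1" "1 \<le> b+1" by simp_all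
        define i where "i = b + 1"
        note i = i[folded i_def]
        then have "i \<le> j" using \<open>k \<le> 2*j\<close> by linarith
        then show ?thesis using j1 i True \<open>k \<le> 2*j\<close> by (simp add: MJ_def)
      qed (use \<open>k \<le> 2*j\<close> in \<open>simp add: MJ_def\<close>)
    next
      case False
      then have "count p k \<le> 1" using j2 by simp
      then have "count p k \<in> {0,1}" by auto
      then show ?thesis using False by (simp add: MJ_def)
    qed
  qed
  then show "\<exists>j\<in>{0..N}. p \<in> SS (MJ j) {1..2*N} n" using jN by auto
next
  assume "\<exists>j\<in>{0..N}. p \<in> SS (MJ j) {1..2*N} n"
  then obtain j where j: "j \<le> N" and p: "set_mset p \<subseteq> {1..2*N}" "\<forall>k\<in>{1..2*N}. count p k \<in> MJ j k" "sum_mset p = n"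
    by (auto simp: SS_def)
  have "p \<in> partitions n" using p by (auto simp: partitions_def)
  moreover have "A3_cond p"
    unfolding A3_cond_def
  proof (intro exI[of _ j] conjI allI impI)
    fix i assume i: "1 \<le> i \<and> i \<le> j"
    then have a: "2*i - 1 \<in> {1..2*N}" "2*i - 1 \<le> 2*j" "odd (2*i - 1)" using j by auto
    then have "count p (2*i - 1) \<in> MJ j (2*i - 1)" using p(2) by blast
    then show "count p (2*i - 1) = 2" using a(2,3) by (simp add: MJ_def)
  next
    fix k assume k: "2*j < k"
    show "count p k \<le> 1"
    proof (cases "k \<in> {1..2*N}")
      case True
      then have "count p k \<in> MJ j k" using p(2) by blast
      then show ?thesis using k by (auto simp: MJ_def)
    next
      case False
      then have "count p k = 0" using p(1) by (auto simp: count_eq_zero_iff)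
      then show ?thesis by simp
    qed
  qed
  ultimately show "p \<in> partitions n \<and> A3_cond p" by simp
qed

lemma SS_disj:
  assumes "j < j'" "j' \<le> N"
  shows "SS (MJ j) {1..2*N} n \<inter> SS (MJ j') {1..2*N} n = {}"
proof (rule ccontr)
  assume "SS (MJ j) {1..2*N} n \<inter> SS (MJ j') {1..2*N} n \<noteq> {}"
  then obtain p where p: "p \<in> SS (MJ j) {1..2*N} n" "p \<in> SS (MJ j') {1..2*N} n" by blast
  have k: "2*j+1 \<in> {1..2*N}" using assms by auto
  have "count p (2*j+1) \<in> MJ j (2*j+1)" using p(1) k by (auto simp: SS_def)
  moreover have "count p (2*j+1) \<in> MJ j' (2*j+1)" using p(2) k by (auto simp: SS_def)
  ultimately show False using assms by (auto simp: MJ_def)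
qed

lemma C33_set: "{p \<in> partitions n. \<forall>x\<in>#p. x mod 7 \<notin> {0,3,4}} = SS MC {1..7*N} n" if N: "n \<le> N"
proof (intro set_eqI iffI)
  fix p assume "p \<in> {p \<in> partitions n. \<forall>x\<in>#p. x mod 7 \<notin> {0,3,4}}"
  then have pos: "\<forall>x\<in>#p. 0 < x" and sm: "sum_mset p = n" and m: "\<forall>x\<in>#p. x mod 7 \<notin> {0,3,4}"
    by (auto simp: partitions_def)
  have "set_mset p \<subseteq> {1..7*N}"
  proof
    fix x assume x: "x \<in># p"
    have "0 < x" using pos x by blast
    moreover have "x \<le> n" using mem_le_sum[OF x] sm by simp
    ultimately show "x \<in> {1..7*N}" using N by simp
  qed
  moreover have "\<forall>k\<in>{1..7*N}. count p k \<in> MC k"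
    using m by (auto simp: MC_def count_eq_zero_iff)
  ultimately show "p \<in> SS MC {1..7*N} n" using sm by (simp add: SS_def)
next
  fix p assume "p \<in> SS MC {1..7*N} n"
  then have p: "set_mset p \<subseteq> {1..7*N}" "\<forall>k\<in>{1..7*N}. count p k \<in> MC k" "sum_mset p = n" by (auto simp: SS_def)
  have "\<forall>x\<in>#p. x mod 7 \<notin> {0,3,4}"
  proof
    fix x assume x: "x \<in># p"
    then have "x \<in> {1..7*N}" using p(1) by auto
    then have "count p x \<in> MC x" using p(2) by auto
    moreover have "count p x \<noteq> 0" using x by auto
    ultimately show "x mod 7 \<notin> {0,3,4}" unfolding MC_def by (auto split: if_splits simp: count_eq_zero_iff)
  qed
  then show "p \<in> {p \<in> partitions n. \<forall>x\<in>#p. x mod 7 \<notin> {0,3,4}}" using p by (auto simp: partitions_def)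
qed

lemma conv_A: "0 < k \<Longrightarrow> fps_to_fls (FF (MJ j) k) = FJf j k"
proof -
  assume k: "0 < k"
  consider "k \<le> 2*j" "odd k" | "k \<le> 2*j" "even k" | "\<not> k \<le> 2*j" by blast
  then show ?thesis
  proof cases
    case 1
    then have "FF (MJ j) k = fps_X^(2*k)" by (intro FF_two k) (simp add: MJ_def)
    then show ?thesis using 1 by (simp add: FJf_def fps_to_fls_power)
  next
    case 2
    then have "FF (MJ j) k = inverse (1 - fps_X^k)" by (intro FF_univ k) (simp add: MJ_def)
    then show ?thesis using 2 k by (simp add: FJf_def fls_inv_1mX)
  next
    case 3
    then have "FF (MJ j) k = 1 + fps_X^k" by (intro FF_01 k) (simp add: MJ_def)
    then show ?thesis using 3 by (simp add: FJf_def fps_to_fls_power)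
  qed
qed

lemma conv_C: "0 < k \<Longrightarrow> fps_to_fls (FF MC k) = FCf k"
proof -
  assume k: "0 < k"
  show ?thesis
  proof (cases "k mod 7 \<in> {0,3,4}")
    case True
    then have "FF MC k = 1" by (intro FF_0 k) (simp add: MC_def)
    then show ?thesis using True by (simp add: FCf_def)
  next
    case False
    then have "FF MC k = inverse (1 - fps_X^k)" by (intro FF_univ k) (simp add: MC_def)
    then show ?thesis using False k by (simp add: FCf_def fls_inv_1mX)
  qed
qed

theorem theorem5:
  fixes n :: nat
  shows "A3 n = C33 n"
proof -
  define N where "N = 2*n+2"
  define GA where "GA = (\<Sum>j\<in>{0..N}. \<Prod>k\<in>{1..2*N}. FF (MJ j) k)"
  define GC where "GC = (\<Prod>k\<in>{1..7*N}. FF MC k)"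
  have setA: "{p \<in> partitions n. A3_cond p} = (\<Union>j\<in>{0..N}. SS (MJ j) {1..2*N} n)"
    using A3_iff[OF N_def] by blast
  have "card {p \<in> partitions n. A3_cond p} = (\<Sum>j\<in>{0..N}. card (SS (MJ j) {1..2*N} n))"
    unfolding setA
  proof (rule card_UN_disjoint)
    show "\<forall>i\<in>{0..N}. finite (SS (MJ i) {1..2*N} n)" by (auto intro: finite_SS)
    show "\<forall>i\<in>{0..N}. \<forall>j\<in>{0..N}. i \<noteq> j \<longrightarrow> SS (MJ i) {1..2*N} n \<inter> SS (MJ j) {1..2*N} n = {}"
    proof (intro ballI impI)
      fix i j assume ij: "i \<in> {0..N}" "j \<in> {0..N}" "i \<noteq> j"
      show "SS (MJ i) {1..2*N} n \<inter> SS (MJ j) {1..2*N} n = {}"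
      proof (cases "i < j")
        case True then show ?thesis using SS_disj[of i j N n] ij by simp
      next
        case False then have "j < i" using ij by simp
        then show ?thesis using SS_disj[of j i N n] ij by (simp add: Int_commute)
      qed
    qed
  qed simp
  then have A: "rat_of_nat (A3 n) = GA $ n"
    unfolding A3_def GA_def fps_sum_nth of_nat_sum by (simp add: comb)
  have "n \<le> N" using N_def by simp
  then have "C33 n = card (SS MC {1..7*N} n)" unfolding C33_def using C33_set[of n N] by simp
  then have C: "rat_of_nat (C33 n) = GC $ n"
    unfolding GC_def using comb[of "{1..7*N}" MC n] by simp
  have fA: "fps_to_fls GA = (\<Sum>j\<in>{0..N}. (\<Prod>k\<in>{1..2*N}. FJf j k))"
    unfolding GA_def fps_to_fls_sum fps_to_fls_prod by (intro sum.cong prod.cong refl conv_A) auto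
  have fC: "fps_to_fls GC = (\<Prod>k\<in>{1..7*N}. FCf k)"
    unfolding GC_def fps_to_fls_prod by (intro prod.cong refl conv_C) auto
  have "sm n (fps_to_fls (GA - GC))"
    using main_fls[OF N_def] unfolding fA[symmetric] fC[symmetric] by simp
  then obtain g where g: "fps_to_fls (GA - GC) = fps_to_fls g" "\<forall>i\<le>n. g $ i = 0"
    unfolding sm_def by blast
  then have "GA - GC = g" by (simp only: fps_to_fls_eq_iff)
  then have "(GA - GC) $ n = 0" using g(2) by simp
  then have "GA $ n = GC $ n" by simp
  with A C show ?thesis by simp
qed


end
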